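(* Let $n\ge 1$, let $\vec u=(u_1,\dots,u_n)\in\{-1,1\}^n$, and let $H_c(\vec u)=\sigma_1^{u_1}\cdots\sigma_n^{u_n}+\sigma_1^{-u_1}\cdots\sigma_n^{-u_n}$ acting on $n$ qubits. Let $v_i=(1+u_i)/2\in\{0,1\}$ and $\bar v_i=(1-u_i)/2=1-v_i$, and define $$|x^{\pm}\rangle=\frac{|v_1\cdots v_n\rangle\pm|\bar v_1\cdots\bar v_n\rangle}{\sqrt2}.$$ Let $G$ be any $n$-qubit unitary with $G|x^+\rangle=|0\,1\cdots1\rangle$ and $G|x^-\rangle=|1\,1\cdots1\rangle$ (first qubit in state $0$, resp. $1$, all other qubits in state $1$). For $\theta\in\mathbb{R}$ let $P(\theta)$ be the $n$-qubit multi-controlled phase gate, i.e. the diagonal unitary with $P(\theta)|1\cdots1\rangle=e^{i\theta}|1\cdots1\rangle$ and $P(\theta)|b\rangle=|b\rangle$ for every other computational basis state $|b\rangle$. Let $X_1$ denote the Pauli $X$ gate on the first qubit. Then for every $\beta\in\mathbb{R}$, $$e^{-i\beta H_c(\vec u)}=G^\dagger P(\beta)X_1P(-\beta)X_1G .$$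
   Context: Qubits are labelled $1,\dots,n$; $|b_1\cdots b_n\rangle$ denotes the computational basis state with qubit $i$ in state $b_i$. $\sigma_i^{u}$ denotes the single-qubit matrix $\sigma^{u}$ on qubit $i$ (tensored with identity elsewhere), where $\sigma^{+1}=\begin{pmatrix}0&0\\1&0\end{pmatrix}$ and $\sigma^{-1}=\begin{pmatrix}0&1\\0&0\end{pmatrix}$ in the basis $|0\rangle,|1\rangle$. In the paper, $\vec u$ arises as a solution of $C\vec u=\vec 0$ for a constraint matrix $C$, restricted to the qubits on which it is nonzero. *)

theory Defs
  imports Complex_Main "Jordan_Normal_Form.Matrix"
begin

text \<open>A computational
basis state |b_1 ... b_n> (b : nat => nat, b i in {0,1} for i in {1..n}) has index
sum_i b_i 2^(n-i), i.e. qubit 1 is the most significant bit.\<close>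

definition qbit :: "nat \<Rightarrow> nat \<Rightarrow> nat \<Rightarrow> nat" where
  "qbit n a i = (a div 2 ^ (n - i)) mod 2"

definition basis_index :: "nat \<Rightarrow> (nat \<Rightarrow> nat) \<Rightarrow> nat" where
  "basis_index n b = (\<Sum>i=1..n. b i * 2 ^ (n - i))"

definition ket :: "nat \<Rightarrow> (nat \<Rightarrow> nat) \<Rightarrow> complex vec" where
  "ket n b = unit_vec (2 ^ n) (basis_index n b)"

text \<open>Single-qubit 2x2 matrix M acting on qubit i, tensored with identity elsewhere.\<close>
definition on_qubit :: "nat \<Rightarrow> nat \<Rightarrow> complex mat \<Rightarrow> complex mat" where
  "on_qubit n i M = mat (2 ^ n) (2 ^ n) (\<lambda>(a, b).
     if (\<forall>j\<in>{1..n}. j \<noteq> i \<longrightarrow> qbit n a j = qbit n b j)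
     then M $$ (qbit n a i, qbit n b i) else 0)"

definition sigma :: "int \<Rightarrow> complex mat" where
  "sigma u = (if u = 1 then mat_of_rows_list 2 [[0, 0], [1, 0]]
              else mat_of_rows_list 2 [[0, 1], [0, 0]])"

definition pauliX :: "complex mat" where
  "pauliX = mat_of_rows_list 2 [[0, 1], [1, 0]]"

definition mprod :: "nat \<Rightarrow> (nat \<Rightarrow> complex mat) \<Rightarrow> complex mat" where
  "mprod n F = foldr (\<lambda>A B. A * B) (map F [1..<n+1]) (1\<^sub>m (2 ^ n))"

definition Hc :: "nat \<Rightarrow> (nat \<Rightarrow> int) \<Rightarrow> complex mat" where
  "Hc n u = mprod n (\<lambda>i. on_qubit n i (sigma (u i)))
          + mprod n (\<lambda>i. on_qubit n i (sigma (- u i)))"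

definition mexp :: "complex mat \<Rightarrow> complex mat" where
  "mexp A = mat (dim_row A) (dim_col A)
     (\<lambda>(i, j). \<Sum>k. (A ^\<^sub>m k) $$ (i, j) / of_nat (fact k))"

definition dagger :: "complex mat \<Rightarrow> complex mat" where
  "dagger A = mat (dim_col A) (dim_row A) (\<lambda>(i, j). cnj (A $$ (j, i)))"

definition unitary :: "nat \<Rightarrow> complex mat \<Rightarrow> bool" where
  "unitary N G \<longleftrightarrow> G \<in> carrier_mat N N \<and> dagger G * G = 1\<^sub>m N \<and> G * dagger G = 1\<^sub>m N"

definition phase_gate :: "nat \<Rightarrow> real \<Rightarrow> complex mat" where
  "phase_gate n \<theta> = mat (2 ^ n) (2 ^ n) (\<lambda>(a, b).
     if a = b then (if a = basis_index n (\<lambda>_. 1) then exp (\<i> * of_real \<theta>) else 1) else 0)"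

end

theory Submission
  imports Defs
begin

lemma bi_Suc: "basis_index (Suc n) b = 2 * basis_index n b + b (Suc n)"
proof -
  have "basis_index (Suc n) b = (\<Sum>i=1..n. b i * 2 ^ (Suc n - i)) + b (Suc n)"
    unfolding basis_index_def by (simp add: sum.atLeast1_atMost_eq)
  also have "(\<Sum>i=1..n. b i * 2 ^ (Suc n - i)) = 2 * basis_index n b"
    unfolding basis_index_def sum_distrib_left
    by (rule sum.cong) (auto simp: Suc_diff_le)
  finally show ?thesis by simp
qed

lemma qbit_Suc: "j \<le> n \<Longrightarrow> qbit (Suc n) a j = qbit n (a div 2) j"
  unfolding qbit_def by (simp add: Suc_diff_le div_mult2_eq mult.commute)

lemma qbit_Suc_last: "qbit (Suc n) a (Suc n) = a mod 2"
  unfolding qbit_def by simp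

lemma bi_lt: "(\<forall>i\<in>{1..n}. b i < 2) \<Longrightarrow> basis_index n b < 2 ^ n"
proof (induction n)
  case 0 then show ?case by (simp add: basis_index_def)
next
  case (Suc n)
  then have "basis_index n b < 2 ^ n" "b (Suc n) < 2" by auto
  then show ?case by (simp add: bi_Suc)
qed

lemma qbit_bi: "(\<forall>i\<in>{1..n}. b i < 2) \<Longrightarrow> j \<in> {1..n} \<Longrightarrow> qbit n (basis_index n b) j = b j"
proof (induction n arbitrary: j)
  case 0 then show ?case by simp
next
  case (Suc n)
  have b: "b (Suc n) < 2" using Suc.prems by auto
  show ?case
  proof (cases "j = Suc n")
    case True then show ?thesis using b by (simp add: bi_Suc qbit_Suc_last)
  next
    case False
    then have "j \<le> n" "j \<in> {1..n}" using Suc.prems by auto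
    then show ?thesis using Suc b by (simp add: bi_Suc qbit_Suc)
  qed
qed

lemma bi_cong: "(\<And>i. i \<in> {1..n} \<Longrightarrow> b i = c i) \<Longrightarrow> basis_index n b = basis_index n c"
  unfolding basis_index_def by (rule sum.cong) auto

lemma bi_qbit: "a < 2 ^ n \<Longrightarrow> basis_index n (qbit n a) = a"
proof (induction n arbitrary: a)
  case 0 then show ?case by (simp add: basis_index_def)
next
  case (Suc n)
  have "basis_index n (qbit (Suc n) a) = basis_index n (qbit n (a div 2))"
    by (rule bi_cong) (simp add: qbit_Suc)
  also have "\<dots> = a div 2" using Suc by (intro Suc.IH) (simp add: less_mult_imp_div_less mult.commute)
  finally show ?case by (simp add: bi_Suc qbit_Suc_last)
qed

lemma qbit_lt[simp]: "qbit n a j < 2"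
  unfolding qbit_def by simp

lemma qbit_inj: "a < 2 ^ n \<Longrightarrow> c < 2 ^ n \<Longrightarrow> (\<forall>j\<in>{1..n}. qbit n a j = qbit n c j) \<Longrightarrow> a = c"
  by (metis bi_qbit bi_cong)

definition setbit :: "nat \<Rightarrow> nat \<Rightarrow> nat \<Rightarrow> nat \<Rightarrow> nat" where
  "setbit n a i y = basis_index n (\<lambda>j. if j = i then y else qbit n a j)"

lemma setbit_lt: "y < 2 \<Longrightarrow> setbit n a i y < 2 ^ n"
  unfolding setbit_def by (rule bi_lt) auto

lemma qbit_setbit: "y < 2 \<Longrightarrow> j \<in> {1..n} \<Longrightarrow> qbit n (setbit n a i y) j = (if j = i then y else qbit n a j)"
  unfolding setbit_def by (subst qbit_bi) auto

lemma mult_entry: "i < dim_row A \<Longrightarrow> j < dim_col B \<Longrightarrow> dim_row B = dim_col A \<Longrightarrow>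
  (A * B) $$ (i, j) = (\<Sum>c<dim_col A. A $$ (i, c) * B $$ (c, j))"
  by (simp add: scalar_prod_def atLeast0LessThan)

lemma on_qubit_dims[simp]: "dim_row (on_qubit n i M) = 2 ^ n" "dim_col (on_qubit n i M) = 2 ^ n"
  by (simp_all add: on_qubit_def)

lemma on_qubit_entry: "a < 2 ^ n \<Longrightarrow> c < 2 ^ n \<Longrightarrow> on_qubit n i M $$ (a, c) =
  (if (\<forall>j\<in>{1..n}. j \<noteq> i \<longrightarrow> qbit n a j = qbit n c j) then M $$ (qbit n a i, qbit n c i) else 0)"
  by (simp add: on_qubit_def)

lemma on_qubit_sum:
  assumes a: "a < 2 ^ n" and i: "i \<in> {1..n}"
  shows "(\<Sum>c<2 ^ n. on_qubit n i M $$ (a, c) * f c) =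
     M $$ (qbit n a i, 0) * f (setbit n a i 0) + M $$ (qbit n a i, 1) * f (setbit n a i 1)"
proof -
  let ?c0 = "setbit n a i 0" and ?c1 = "setbit n a i 1"
  have q0: "j \<in> {1..n} \<Longrightarrow> qbit n ?c0 j = (if j = i then 0 else qbit n a j)" for j
    by (simp add: qbit_setbit)
  have q1: "j \<in> {1..n} \<Longrightarrow> qbit n ?c1 j = (if j = i then 1 else qbit n a j)" for j
    by (simp add: qbit_setbit)
  have ne: "?c0 \<noteq> ?c1" using q0[OF i] q1[OF i] by auto
  have lt: "?c0 < 2 ^ n" "?c1 < 2 ^ n" by (simp_all add: setbit_lt)
  have "(\<Sum>c<2 ^ n. on_qubit n i M $$ (a, c) * f c) = (\<Sum>c\<in>{?c0, ?c1}. on_qubit n i M $$ (a, c) * f c)"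
  proof (rule sum.mono_neutral_right)
    show "{?c0, ?c1} \<subseteq> {..<2 ^ n}" using lt by auto
    show "\<forall>c\<in>{..<2 ^ n} - {?c0, ?c1}. on_qubit n i M $$ (a, c) * f c = 0"
    proof
      fix c assume c: "c \<in> {..<2 ^ n} - {?c0, ?c1}"
      show "on_qubit n i M $$ (a, c) * f c = 0"
      proof (cases "\<forall>j\<in>{1..n}. j \<noteq> i \<longrightarrow> qbit n a j = qbit n c j")
        case True
        have "c = setbit n a i (qbit n c i)"
          by (rule qbit_inj[of _ n]) (use c True in \<open>auto simp: setbit_lt qbit_setbit\<close>)
        moreover have "qbit n c i = 0 \<or> qbit n c i = 1" using qbit_lt[of n c i] by linarith
        ultimately show ?thesis using c by auto
      next
        case False then show ?thesis using c a by (auto simp: on_qubit_entry)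
      qed
    qed
  qed simp
  also have "\<dots> = on_qubit n i M $$ (a, ?c0) * f ?c0 + on_qubit n i M $$ (a, ?c1) * f ?c1"
    using ne by simp
  also have "on_qubit n i M $$ (a, ?c0) = M $$ (qbit n a i, 0)"
    using a lt i by (auto simp: on_qubit_entry qbit_setbit)
  also have "on_qubit n i M $$ (a, ?c1) = M $$ (qbit n a i, 1)"
    using a lt i by (auto simp: on_qubit_entry qbit_setbit)
  finally show ?thesis .
qed

declare upt_Suc[simp del]

lemma if_helper: "T = (if C' then 1 else 0) \<Longrightarrow> (Q \<and> C' \<longleftrightarrow> C) \<Longrightarrow> (if Q then T else 0) = (if C then (1::complex) else 0)"
  by (cases Q; cases C; cases C') simp_all

lemma on_qubit_carrier: "on_qubit n i M \<in> carrier_mat (2^n) (2^n)"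
  by (rule carrier_matI) (rule on_qubit_dims)+

lemma mprod_gen:
  fixes w w' :: "nat \<Rightarrow> nat" and M :: "nat \<Rightarrow> complex mat"
  assumes w: "\<forall>k\<in>{1..n}. w k < 2" and w': "\<forall>k\<in>{1..n}. w' k < 2"
    and Mk: "\<forall>k\<in>{1..n}. \<forall>x<2. \<forall>y<2. M k $$ (x, y) = (if x = w k \<and> y = w' k then 1 else 0)"
  shows "1 \<le> k \<Longrightarrow> k \<le> n + 1 \<Longrightarrow>
    foldr (\<lambda>A B. A * B) (map (\<lambda>k. on_qubit n k (M k)) [k..<n+1]) (1\<^sub>m (2 ^ n)) \<in> carrier_mat (2^n) (2^n) \<and>
    (\<forall>a<2^n. \<forall>b<2^n. foldr (\<lambda>A B. A * B) (map (\<lambda>k. on_qubit n k (M k)) [k..<n+1]) (1\<^sub>m (2 ^ n)) $$ (a, b)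
      = (if (\<forall>j\<in>{k..n}. qbit n a j = w j \<and> qbit n b j = w' j) \<and> (\<forall>j\<in>{1..<k}. qbit n a j = qbit n b j) then 1 else 0))"
proof (induction "n + 1 - k" arbitrary: k)
  case 0
  then have k: "k = n + 1" by simp
  have T: "foldr (\<lambda>A B. A * B) (map (\<lambda>k. on_qubit n k (M k)) [k..<n+1]) (1\<^sub>m (2 ^ n)) = 1\<^sub>m (2^n)"
    unfolding k by simp
  show ?case unfolding T
  proof (intro conjI allI impI)
    fix a b :: nat assume a: "a < 2^n" and b: "b < 2^n"
    have e: "(\<forall>j\<in>{1..<k}. qbit n a j = qbit n b j) \<longleftrightarrow> a = b"
    proof
      assume "\<forall>j\<in>{1..<k}. qbit n a j = qbit n b j"
      then have "\<forall>j\<in>{1..n}. qbit n a j = qbit n b j" unfolding k by auto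
      then show "a = b" by (rule qbit_inj[OF a b])
    qed simp
    have e2: "{k..n} = {}" unfolding k by simp
    show "1\<^sub>m (2 ^ n) $$ (a, b) = (if (\<forall>j\<in>{k..n}. qbit n a j = w j \<and> qbit n b j = w' j) \<and> (\<forall>j\<in>{1..<k}. qbit n a j = qbit n b j) then 1 else 0)"
      unfolding e e2 using a b by simp
  qed simp
next
  case (Suc m)
  let ?T = "\<lambda>k. foldr (\<lambda>A B. A * B) (map (\<lambda>k. on_qubit n k (M k)) [k..<n+1]) (1\<^sub>m (2 ^ n))"
  have kn: "k \<le> n" using Suc.hyps(2) by simp
  have IH: "?T (Suc k) \<in> carrier_mat (2^n) (2^n) \<and>
    (\<forall>a<2^n. \<forall>b<2^n. ?T (Suc k) $$ (a, b)
      = (if (\<forall>j\<in>{Suc k..n}. qbit n a j = w j \<and> qbit n b j = w' j) \<and> (\<forall>j\<in>{1..<Suc k}. qbit n a j = qbit n b j) then 1 else 0))"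
    using Suc.hyps(2) Suc.prems by (intro Suc.hyps(1)) auto
  have Tk: "?T k = on_qubit n k (M k) * ?T (Suc k)"
  proof -
    have "[k..<n+1] = k # [Suc k..<n+1]" using kn by (intro upt_conv_Cons) simp
    then show ?thesis by (simp only: list.map foldr_Cons o_apply)
  qed
  have ki: "k \<in> {1..n}" using kn Suc.prems by simp
  show ?case
  proof (intro conjI allI impI)
    show "?T k \<in> carrier_mat (2^n) (2^n)" unfolding Tk by (rule mult_carrier_mat[OF on_qubit_carrier IH[THEN conjunct1]])
    fix a b :: nat assume a: "a < 2^n" and b: "b < 2^n"
    let ?c = "setbit n a k (w' k)"
    have wk: "w' k < 2" "w k < 2" using w w' ki by auto
    have C: "dim_row (?T (Suc k)) = 2^n" "dim_col (?T (Suc k)) = 2^n"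
      using carrier_matD[OF IH[THEN conjunct1]] by blast+
    have "?T k $$ (a, b) = (\<Sum>c<dim_col (on_qubit n k (M k)). on_qubit n k (M k) $$ (a, c) * ?T (Suc k) $$ (c, b))"
      unfolding Tk by (rule mult_entry) (simp_all only: C on_qubit_dims a b)
    also have "\<dots> = (\<Sum>c<2 ^ n. on_qubit n k (M k) $$ (a, c) * ?T (Suc k) $$ (c, b))"
      by (simp only: on_qubit_dims)
    also have "\<dots> = M k $$ (qbit n a k, 0) * ?T (Suc k) $$ (setbit n a k 0, b)
       + M k $$ (qbit n a k, 1) * ?T (Suc k) $$ (setbit n a k 1, b)"
      by (rule on_qubit_sum[OF a ki])
    also have "\<dots> = (if qbit n a k = w k then ?T (Suc k) $$ (?c, b) else 0)"
    proof -
      have qa: "qbit n a k < 2" by simp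
      have Mk': "\<forall>x<2. \<forall>y<2. M k $$ (x, y) = (if x = w k \<and> y = w' k then 1 else 0)"
        using Mk ki by blast
      have m0: "M k $$ (qbit n a k, 0) = (if qbit n a k = w k \<and> 0 = w' k then 1 else 0)"
        using Mk' qa by simp
      have m1: "M k $$ (qbit n a k, 1) = (if qbit n a k = w k \<and> 1 = w' k then 1 else 0)"
        using Mk' qa by simp
      have "w' k = 0 \<or> w' k = 1" using wk by linarith
      then show ?thesis unfolding m0 m1 by (elim disjE) simp_all

    qed
    also have "\<dots> = (if (\<forall>j\<in>{k..n}. qbit n a j = w j \<and> qbit n b j = w' j) \<and> (\<forall>j\<in>{1..<k}. qbit n a j = qbit n b j) then 1 else 0)"
    proof -
      have qc: "j \<in> {1..n} \<Longrightarrow> qbit n ?c j = (if j = k then w' k else qbit n a j)" for j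
        using wk by (simp add: qbit_setbit)
      have cl: "?c < 2^n" using wk by (simp add: setbit_lt)
      have eq: "(qbit n a k = w k \<and> (\<forall>j\<in>{Suc k..n}. qbit n ?c j = w j \<and> qbit n b j = w' j) \<and> (\<forall>j\<in>{1..<Suc k}. qbit n ?c j = qbit n b j))
        \<longleftrightarrow> ((\<forall>j\<in>{k..n}. qbit n a j = w j \<and> qbit n b j = w' j) \<and> (\<forall>j\<in>{1..<k}. qbit n a j = qbit n b j))"
      proof -
        have e1: "(\<forall>j\<in>{Suc k..n}. qbit n ?c j = w j \<and> qbit n b j = w' j) \<longleftrightarrow> (\<forall>j\<in>{Suc k..n}. qbit n a j = w j \<and> qbit n b j = w' j)"
          using qc ki by auto
        have e2: "(\<forall>j\<in>{1..<Suc k}. qbit n ?c j = qbit n b j) \<longleftrightarrow> (w' k = qbit n b k \<and> (\<forall>j\<in>{1..<k}. qbit n a j = qbit n b j))"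
        proof -
          have s: "{1..<Suc k} = insert k {1..<k}" using ki by (simp add: atLeastLessThanSuc)
          have "(\<forall>j\<in>{1..<k}. qbit n ?c j = qbit n b j) \<longleftrightarrow> (\<forall>j\<in>{1..<k}. qbit n a j = qbit n b j)"
            using qc ki by (intro ball_cong) auto
          moreover have "qbit n ?c k = w' k" using qc ki by simp
          ultimately show ?thesis unfolding s by simp
        qed
        have e3: "(\<forall>j\<in>{k..n}. P j) \<longleftrightarrow> P k \<and> (\<forall>j\<in>{Suc k..n}. P j)" for P
          using ki by (metis Suc_le_eq atLeastAtMost_iff le_eq_less_or_eq)
        show ?thesis unfolding e1 e2 e3 by (simp only: eq_commute[of "w' k"]) blast
      qed
      have "?T (Suc k) $$ (?c, b) = (if (\<forall>j\<in>{Suc k..n}. qbit n ?c j = w j \<and> qbit n b j = w' j) \<and> (\<forall>j\<in>{1..<Suc k}. qbit n ?c j = qbit n b j) then 1 else 0)"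
        using IH[THEN conjunct2] cl b by blast
      then show ?thesis using eq by (rule if_helper)
    qed
    finally show "?T k $$ (a, b) = (if (\<forall>j\<in>{k..n}. qbit n a j = w j \<and> qbit n b j = w' j) \<and> (\<forall>j\<in>{1..<k}. qbit n a j = qbit n b j) then 1 else 0)" .
  qed
qed

lemma bit_char: assumes w: "\<forall>k\<in>{1..n}. w k < 2" and a: "a < 2^n"
  shows "(\<forall>j\<in>{1..n}. qbit n a j = w j) \<longleftrightarrow> a = basis_index n w"
proof
  assume h: "\<forall>j\<in>{1..n}. qbit n a j = w j"
  have "a = basis_index n (qbit n a)" using bi_qbit[OF a] by simp
  also have "\<dots> = basis_index n w" using h by (intro bi_cong) simp
  finally show "a = basis_index n w" .
next
  assume "a = basis_index n w"
  then show "\<forall>j\<in>{1..n}. qbit n a j = w j" using qbit_bi[OF w] by simp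
qed

lemma mprod_entry:
  fixes w w' :: "nat \<Rightarrow> nat" and M :: "nat \<Rightarrow> complex mat"
  assumes w: "\<forall>k\<in>{1..n}. w k < 2" and w': "\<forall>k\<in>{1..n}. w' k < 2"
    and Mk: "\<forall>k\<in>{1..n}. \<forall>x<2. \<forall>y<2. M k $$ (x, y) = (if x = w k \<and> y = w' k then 1 else 0)"
  shows "mprod n (\<lambda>k. on_qubit n k (M k)) \<in> carrier_mat (2^n) (2^n)"
    and "a < 2^n \<Longrightarrow> b < 2^n \<Longrightarrow> mprod n (\<lambda>k. on_qubit n k (M k)) $$ (a, b)
      = (if a = basis_index n w \<and> b = basis_index n w' then 1 else 0)"
proof -
  note G = mprod_gen[OF w w' Mk order_refl le_add2]
  show "mprod n (\<lambda>k. on_qubit n k (M k)) \<in> carrier_mat (2^n) (2^n)"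
    using G unfolding mprod_def by simp
  assume a: "a < 2^n" and b: "b < 2^n"
  have e1: "(\<forall>j\<in>{1..n}. qbit n a j = w j) \<longleftrightarrow> a = basis_index n w"
    using bit_char[OF w a] .
  have e2: "(\<forall>j\<in>{1..n}. qbit n b j = w' j) \<longleftrightarrow> b = basis_index n w'"
    using bit_char[OF w' b] .
  have "mprod n (\<lambda>k. on_qubit n k (M k)) $$ (a, b) = (if (\<forall>j\<in>{1..n}. qbit n a j = w j \<and> qbit n b j = w' j) \<and> (\<forall>j\<in>{1..<1}. qbit n a j = qbit n b j) then 1 else 0)"
    using G a b unfolding mprod_def by blast
  also have "(\<forall>j\<in>{1..n}. qbit n a j = w j \<and> qbit n b j = w' j) \<and> (\<forall>j\<in>{1..<1}. qbit n a j = qbit n b j)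
     \<longleftrightarrow> a = basis_index n w \<and> b = basis_index n w'" unfolding e1[symmetric] e2[symmetric] by auto
  finally show "mprod n (\<lambda>k. on_qubit n k (M k)) $$ (a, b)
      = (if a = basis_index n w \<and> b = basis_index n w' then 1 else 0)" .
qed

lemma sigma_entry:
  assumes u: "u = 1 \<or> u = -1" and x: "x < 2" and y: "y < 2"
  shows "sigma u $$ (x, y) = (if x = nat ((1 + u) div 2) \<and> y = nat ((1 - u) div 2) then 1 else 0)"
proof -
  have x2: "x = 0 \<or> x = 1" and y2: "y = 0 \<or> y = 1" using x y by linarith+
  from u show ?thesis
  proof
    assume "u = 1" then show ?thesis using x2 y2 by (elim disjE) (simp_all add: sigma_def mat_of_rows_list_def)
  next
    assume "u = -1" then show ?thesis using x2 y2 by (elim disjE) (simp_all add: sigma_def mat_of_rows_list_def)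
  qed
qed

definition dl :: "nat \<Rightarrow> nat \<Rightarrow> complex" where "dl x i = (if i = x then 1 else 0)"

lemma Hc_entry:
  assumes n: "n \<ge> 1" and u: "\<forall>i\<in>{1..n}. u i = 1 \<or> u i = -1"
  defines "p \<equiv> basis_index n (\<lambda>i. nat ((1 + u i) div 2))"
    and "q \<equiv> basis_index n (\<lambda>i. nat ((1 - u i) div 2))"
  shows "Hc n u \<in> carrier_mat (2^n) (2^n)"
    and "a < 2^n \<Longrightarrow> b < 2^n \<Longrightarrow> Hc n u $$ (a, b) = dl p a * dl q b + dl q a * dl p b"
    and "p \<noteq> q" "p < 2^n" "q < 2^n"
proof -
  let ?v = "\<lambda>i. nat ((1 + u i) div 2)" and ?w = "\<lambda>i. nat ((1 - u i) div 2)"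
  have v: "\<forall>k\<in>{1..n}. ?v k < 2" and w: "\<forall>k\<in>{1..n}. ?w k < 2" using u by auto
  have M1: "\<forall>k\<in>{1..n}. \<forall>x<2. \<forall>y<2. sigma (u k) $$ (x, y) = (if x = ?v k \<and> y = ?w k then 1 else 0)"
    using u sigma_entry by blast
  have M2: "\<forall>k\<in>{1..n}. \<forall>x<2. \<forall>y<2. sigma (- u k) $$ (x, y) = (if x = ?w k \<and> y = ?v k then 1 else 0)"
  proof (intro ballI allI impI)
    fix k x y assume k: "k \<in> {1..n}" and x: "x < (2::nat)" and y: "y < (2::nat)"
    have "- u k = 1 \<or> - u k = -1" using u k by auto
    then show "sigma (- u k) $$ (x, y) = (if x = ?w k \<and> y = ?v k then 1 else 0)"
      using sigma_entry[OF _ x y, of "- u k"] by simp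
  qed
  note A1 = mprod_entry[OF v w M1] and A2 = mprod_entry[OF w v M2]
  show "Hc n u \<in> carrier_mat (2^n) (2^n)" unfolding Hc_def
    by (rule add_carrier_mat[OF A2(1)])
  show "a < 2^n \<Longrightarrow> b < 2^n \<Longrightarrow> Hc n u $$ (a, b) = dl p a * dl q b + dl q a * dl p b"
  proof -
    assume a: "a < 2^n" and b: "b < 2^n"
    have "Hc n u $$ (a, b) = mprod n (\<lambda>i. on_qubit n i (sigma (u i))) $$ (a, b)
       + mprod n (\<lambda>i. on_qubit n i (sigma (- u i))) $$ (a, b)"
      unfolding Hc_def by (rule index_add_mat(1)) (simp_all only: carrier_matD[OF A2(1)] a b)
    also have "\<dots> = dl p a * dl q b + dl q a * dl p b"
    proof -
      have E1: "mprod n (\<lambda>i. on_qubit n i (sigma (u i))) $$ (a, b) = (if a = p \<and> b = q then 1 else 0)"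
        using A1(2)[OF a b] unfolding p_def q_def .
      have E2: "mprod n (\<lambda>i. on_qubit n i (sigma (- u i))) $$ (a, b) = (if a = q \<and> b = p then 1 else 0)"
        using A2(2)[OF a b] unfolding p_def q_def .
      show ?thesis unfolding E1 E2 dl_def by (cases "a = p"; cases "a = q"; cases "b = p"; cases "b = q") simp_all
    qed
    finally show ?thesis .
  qed
  have "qbit n p 1 = ?v 1" "qbit n q 1 = ?w 1" unfolding p_def q_def
    using qbit_bi[OF v] qbit_bi[OF w] n by auto
  moreover have "?v 1 \<noteq> ?w 1"
  proof -
    have "u 1 = 1 \<or> u 1 = -1" using u n by simp
    then show ?thesis by (elim disjE) simp_all
  qed
  ultimately show "p \<noteq> q" by auto
  show "p < 2^n" "q < 2^n" unfolding p_def q_def using bi_lt v w by auto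
qed

definition Xp :: "nat \<Rightarrow> nat \<Rightarrow> nat \<Rightarrow> nat \<Rightarrow> complex" where
  "Xp p q i j = (dl p i + dl q i) * (dl p j + dl q j) / 2"
definition Xm :: "nat \<Rightarrow> nat \<Rightarrow> nat \<Rightarrow> nat \<Rightarrow> complex" where
  "Xm p q i j = (dl p i - dl q i) * (dl p j - dl q j) / 2"
definition gk :: "complex \<Rightarrow> nat \<Rightarrow> nat \<Rightarrow> nat \<Rightarrow> nat \<Rightarrow> nat \<Rightarrow> complex" where
  "gk c p q k i j = (if k = 0 then dl j i - Xp p q i j - Xm p q i j else 0) + c ^ k * Xp p q i j + (- c) ^ k * Xm p q i j"

lemma gk_step: assumes pq: "p \<noteq> q"
  shows "gk c p q (Suc k) i j = c * (gk c p q k i p * dl q j + gk c p q k i q * dl p j)"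
proof (cases "k = 0")
  case True
  then show ?thesis using pq
    by (cases "i = p"; cases "i = q"; cases "j = p"; cases "j = q") (simp_all add: gk_def Xp_def Xm_def dl_def)
next
  case False
  then show ?thesis using pq
    by (cases "i = p"; cases "i = q"; cases "j = p"; cases "j = q") (simp_all add: gk_def Xp_def Xm_def dl_def right_diff_distrib distrib_left)
qed

lemma dl_sum: "p < N \<Longrightarrow> (\<Sum>l<N. dl p l * f l) = f p"
proof -
  assume p: "p < N"
  have "(\<Sum>l<N. dl p l * f l) = (\<Sum>l<N. if l = p then f p else 0)"
    by (rule sum.cong) (simp_all add: dl_def)
  also have "\<dots> = f p" using p by (simp add: sum.delta)
  finally show ?thesis .
qed

lemma dl_sum2: assumes "p < N" "q < N"
  shows "(\<Sum>l<N. f l * (c * (dl p l * x + dl q l * y))) = c * (f p * x + f q * y)"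
proof -
  have "(\<Sum>l<N. f l * (c * (dl p l * x + dl q l * y))) = (\<Sum>l<N. (c*x) * (dl p l * f l) + (c*y) * (dl q l * f l))"
    by (rule sum.cong) (simp_all add: algebra_simps)
  also have "\<dots> = (c*x) * (\<Sum>l<N. dl p l * f l) + (c*y) * (\<Sum>l<N. dl q l * f l)"
    by (simp add: sum.distrib sum_distrib_left)
  also have "\<dots> = c * (f p * x + f q * y)" unfolding dl_sum[OF assms(1)] dl_sum[OF assms(2)] by (simp add: algebra_simps)
  finally show ?thesis .
qed

lemma pow_entry:
  fixes A :: "complex mat"
  assumes A: "A \<in> carrier_mat N N" and pN: "p < N" and qN: "q < N" and pq: "p \<noteq> q"
    and Ae: "\<And>a b. a < N \<Longrightarrow> b < N \<Longrightarrow> A $$ (a, b) = c * (dl p a * dl q b + dl q a * dl p b)"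
  shows "i < N \<Longrightarrow> j < N \<Longrightarrow> (A ^\<^sub>m k) $$ (i, j) = gk c p q k i j"
proof (induction k arbitrary: i j)
  case 0
  have dA: "dim_row A = N" using carrier_matD[OF A] by blast
  have "(A ^\<^sub>m 0) $$ (i, j) = (if i = j then 1 else 0)" using 0 by (simp add: dA)
  also have "\<dots> = gk c p q 0 i j" by (simp add: gk_def dl_def)
  finally show ?case .
next
  case (Suc k)
  have dA: "dim_row A = N" "dim_col A = N" using carrier_matD[OF A] by blast+
  have dK: "dim_row (A ^\<^sub>m k) = N" "dim_col (A ^\<^sub>m k) = N" using carrier_matD[OF pow_carrier_mat[OF A]] by blast+
  have "(A ^\<^sub>m Suc k) $$ (i, j) = (A ^\<^sub>m k * A) $$ (i, j)" by simp
  also have "\<dots> = (\<Sum>l<dim_col (A ^\<^sub>m k). (A ^\<^sub>m k) $$ (i, l) * A $$ (l, j))"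
    by (rule mult_entry) (simp_all only: dA dK Suc.prems)
  also have "\<dots> = (\<Sum>l<N. gk c p q k i l * (c * (dl p l * dl q j + dl q l * dl p j)))"
    unfolding dK(2) by (rule sum.cong) (simp_all add: Suc.IH Suc.prems Ae)
  also have "\<dots> = c * (gk c p q k i p * dl q j + gk c p q k i q * dl p j)"
    by (rule dl_sum2[OF pN qN])
  also have "\<dots> = gk c p q (Suc k) i j" by (rule gk_step[OF pq, symmetric])
  finally show ?case .
qed

lemma exp_sums_c: "(\<lambda>k. c ^ k / of_nat (fact k)) sums exp (c::complex)"
  using exp_converges[of c] by (simp add: scaleR_conv_of_real divide_inverse_commute)

lemma gk_sums: "(\<lambda>k. gk c p q k i j / of_nat (fact k)) sums
   ((dl j i - Xp p q i j - Xm p q i j) + exp c * Xp p q i j + exp (-c) * Xm p q i j)"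
proof -
  have e: "(\<lambda>k. gk c p q k i j / of_nat (fact k)) = (\<lambda>k. (if k = 0 then dl j i - Xp p q i j - Xm p q i j else 0)
      + (c ^ k / of_nat (fact k)) * Xp p q i j + ((-c) ^ k / of_nat (fact k)) * Xm p q i j)"
    by (rule ext) (simp add: gk_def add_divide_distrib)
  show ?thesis unfolding e
    by (intro sums_add sums_mult2 exp_sums_c) (rule sums_single[where f = "\<lambda>_. dl j i - Xp p q i j - Xm p q i j", of 0])
qed

definition fl :: "nat \<Rightarrow> nat \<Rightarrow> nat" where "fl n a = setbit n a 1 (1 - qbit n a 1)"

lemma fl_lt: "fl n a < 2 ^ n"
  unfolding fl_def by (rule setbit_lt) simp

lemma qbit_fl: "j \<in> {1..n} \<Longrightarrow> qbit n (fl n a) j = (if j = 1 then 1 - qbit n a 1 else qbit n a j)"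
  unfolding fl_def by (rule qbit_setbit) simp_all

lemma fl_fl: assumes a: "a < 2 ^ n" shows "fl n (fl n a) = a"
proof (rule qbit_inj[OF fl_lt a], intro ballI)
  fix j assume j: "j \<in> {1..n}"
  have h: "1 - (1 - qbit n a 1) = qbit n a 1" using qbit_lt[of n a 1] by linarith
  have j1: "(1::nat) \<in> {1..n}" using j by simp
  show "qbit n (fl n (fl n a)) j = qbit n a j"
  proof (cases "j = 1")
    case True
    then show ?thesis unfolding qbit_fl[OF j] qbit_fl[OF j1] using h by simp
  next
    case False
    then show ?thesis unfolding qbit_fl[OF j] by simp
  qed
qed

lemma pauliX_entry: "x < 2 \<Longrightarrow> y < 2 \<Longrightarrow> pauliX $$ (x, y) = (if x = y then 0 else 1)"
proof -
  assume x: "x < 2" and y: "y < 2"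
  have x2: "x = 0 \<or> x = 1" and y2: "y = 0 \<or> y = 1" using x y by linarith+
  then show ?thesis by (elim disjE) (simp_all add: pauliX_def mat_of_rows_list_def)
qed

lemma X_sum: assumes a: "a < 2 ^ n" and n: "n \<ge> 1"
  shows "(\<Sum>c<2 ^ n. on_qubit n 1 pauliX $$ (a, c) * f c) = f (fl n a)"
proof -
  have i: "(1::nat) \<in> {1..n}" using n by simp
  have q: "qbit n a 1 = 0 \<or> qbit n a 1 = 1" using qbit_lt[of n a 1] by linarith
  show ?thesis unfolding on_qubit_sum[OF a i] fl_def
    using q by (elim disjE) (simp_all add: pauliX_entry)
qed

lemma X_sym: assumes a: "a < 2 ^ n" and c: "c < 2 ^ n"
  shows "on_qubit n 1 pauliX $$ (c, a) = on_qubit n 1 pauliX $$ (a, c)"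
proof -
  have e: "(\<forall>j\<in>{1..n}. j \<noteq> 1 \<longrightarrow> qbit n c j = qbit n a j) \<longleftrightarrow> (\<forall>j\<in>{1..n}. j \<noteq> 1 \<longrightarrow> qbit n a j = qbit n c j)"
    by auto
  have p: "pauliX $$ (qbit n c 1, qbit n a 1) = pauliX $$ (qbit n a 1, qbit n c 1)"
    by (simp add: pauliX_entry)
  show ?thesis unfolding on_qubit_entry[OF a c] on_qubit_entry[OF c a] e p ..
qed

lemma right_X: assumes M: "dim_col M = 2 ^ n" and i: "i < dim_row M" and a: "a < 2 ^ n" and n: "n \<ge> 1"
  shows "(M * on_qubit n 1 pauliX) $$ (i, a) = M $$ (i, fl n a)"
proof -
  have "(M * on_qubit n 1 pauliX) $$ (i, a) = (\<Sum>c<dim_col M. M $$ (i, c) * on_qubit n 1 pauliX $$ (c, a))"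
    by (rule mult_entry) (simp_all add: i a M)
  also have "\<dots> = (\<Sum>c<2 ^ n. on_qubit n 1 pauliX $$ (a, c) * M $$ (i, c))"
    unfolding M
  proof (rule sum.cong[OF refl])
    fix c assume "c \<in> {..<(2::nat) ^ n}"
    then have c: "c < 2 ^ n" by simp
    show "M $$ (i, c) * on_qubit n 1 pauliX $$ (c, a) = on_qubit n 1 pauliX $$ (a, c) * M $$ (i, c)"
      unfolding X_sym[OF a c] by (rule mult.commute)
  qed
  also have "\<dots> = M $$ (i, fl n a)" by (rule X_sum[OF a n])
  finally show ?thesis .
qed

definition dph :: "nat \<Rightarrow> real \<Rightarrow> nat \<Rightarrow> complex" where
  "dph n \<theta> a = (if a = basis_index n (\<lambda>_. 1) then exp (\<i> * of_real \<theta>) else 1)"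

lemma phase_dims[simp]: "dim_row (phase_gate n \<theta>) = 2 ^ n" "dim_col (phase_gate n \<theta>) = 2 ^ n"
  by (simp_all add: phase_gate_def)

lemma right_P: assumes M: "dim_col M = 2 ^ n" and i: "i < dim_row M" and a: "a < 2 ^ n"
  shows "(M * phase_gate n \<theta>) $$ (i, a) = M $$ (i, a) * dph n \<theta> a"
proof -
  have "(M * phase_gate n \<theta>) $$ (i, a) = (\<Sum>c<dim_col M. M $$ (i, c) * phase_gate n \<theta> $$ (c, a))"
    by (rule mult_entry) (simp_all add: i a M)
  also have "\<dots> = (\<Sum>c<2 ^ n. if c = a then M $$ (i, a) * dph n \<theta> a else 0)"
    unfolding M by (rule sum.cong) (simp_all add: a phase_gate_def dph_def)
  also have "\<dots> = M $$ (i, a) * dph n \<theta> a" using a by (simp add: sum.delta)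
  finally show ?thesis .
qed

lemma dagger_dims[simp]: "dim_row (dagger G) = dim_col G" "dim_col (dagger G) = dim_row G"
  by (simp_all add: dagger_def)

lemma dagger_entry: "i < dim_col G \<Longrightarrow> j < dim_row G \<Longrightarrow> dagger G $$ (i, j) = cnj (G $$ (j, i))"
  by (simp add: dagger_def)

lemma half_sq: "complex_of_real (1 / sqrt 2) * complex_of_real (1 / sqrt 2) = 1 / 2"
proof -
  have "(1 / sqrt 2) * (1 / sqrt 2) = (1 / 2 :: real)" by (simp add: real_sqrt_mult_self)
  then have "complex_of_real ((1 / sqrt 2) * (1 / sqrt 2)) = complex_of_real (1/2)" by simp
  then show ?thesis by (simp only: of_real_mult of_real_divide of_real_1 of_real_numeral)
qed

lemma cnj_dl[simp]: "cnj (dl p i) = dl p i"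
  by (simp add: dl_def)

lemma G_row:
  assumes G: "unitary (2 ^ n) G" and r: "r < 2 ^ n" and i: "i < 2 ^ n"
    and xc: "x \<in> carrier_vec (2^n)" and Gx: "G *\<^sub>v x = unit_vec (2^n) r"
  shows "cnj (G $$ (r, i)) = x $ i"
proof -
  have Gc: "G \<in> carrier_mat (2^n) (2^n)" and GG: "dagger G * G = 1\<^sub>m (2^n)"
    using G unfolding unitary_def by blast+
  have dG: "dim_row G = 2^n" "dim_col G = 2^n" using carrier_matD[OF Gc] by blast+
  have dGc: "dagger G \<in> carrier_mat (2^n) (2^n)" by (rule carrier_matI) (simp_all add: dG)
  have "dagger G *\<^sub>v unit_vec (2^n) r = dagger G *\<^sub>v (G *\<^sub>v x)" unfolding Gx ..
  also have "\<dots> = (dagger G * G) *\<^sub>v x" by (rule assoc_mult_mat_vec[OF dGc Gc xc, symmetric])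
  also have "\<dots> = x" unfolding GG by (rule one_mult_mat_vec[OF xc])
  finally have e: "dagger G *\<^sub>v unit_vec (2^n) r = x" .
  have "(dagger G *\<^sub>v unit_vec (2^n) r) $ i = cnj (G $$ (r, i))"
    using i r by (simp add: dG dagger_entry)
  then show ?thesis using e by simp
qed

lemma rearr: "(a::complex) * x * (a * y) = (a * a) * (x * y)"
  by (simp only: mult_ac)

theorem lemma2:
  fixes n :: nat and u :: "nat \<Rightarrow> int" and G :: "complex mat" and \<beta> :: real
  assumes n: "n \<ge> 1"
    and u: "\<forall>i\<in>{1..n}. u i = 1 \<or> u i = -1"
    and G: "unitary (2 ^ n) G"
    and Gp: "G *\<^sub>v ((complex_of_real (1 / sqrt 2)) \<cdot>\<^sub>v
               (ket n (\<lambda>i. nat ((1 + u i) div 2)) + ket n (\<lambda>i. nat ((1 - u i) div 2))))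
             = ket n (\<lambda>i. if i = 1 then 0 else 1)"
    and Gm: "G *\<^sub>v ((complex_of_real (1 / sqrt 2)) \<cdot>\<^sub>v
               (ket n (\<lambda>i. nat ((1 + u i) div 2)) - ket n (\<lambda>i. nat ((1 - u i) div 2))))
             = ket n (\<lambda>i. 1)"
  shows "mexp ((- \<i> * of_real \<beta>) \<cdot>\<^sub>m Hc n u)
         = dagger G * phase_gate n \<beta> * on_qubit n 1 pauliX * phase_gate n (- \<beta>)
             * on_qubit n 1 pauliX * G"
proof -
  define p where "p = basis_index n (\<lambda>i. nat ((1 + u i) div 2))"
  define q where "q = basis_index n (\<lambda>i. nat ((1 - u i) div 2))"
  define r where "r = basis_index n (\<lambda>i. if i = 1 then 0 else (1::nat))"
  define s where "s = basis_index n (\<lambda>_. (1::nat))"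
  define c where "c = - \<i> * complex_of_real \<beta>"
  let ?N = "(2::nat) ^ n"
  note H = Hc_entry[OF n u]
  have Hc: "Hc n u \<in> carrier_mat ?N ?N" by (rule H(1))
  have He: "\<And>a b. a < ?N \<Longrightarrow> b < ?N \<Longrightarrow> Hc n u $$ (a, b) = dl p a * dl q b + dl q a * dl p b"
    unfolding p_def q_def by (rule H(2))
  have pq: "p \<noteq> q" and pN: "p < ?N" and qN: "q < ?N" unfolding p_def q_def by (rule H(3), rule H(4), rule H(5))
  let ?A = "c \<cdot>\<^sub>m Hc n u"
  have dH: "dim_row (Hc n u) = ?N" "dim_col (Hc n u) = ?N" using carrier_matD[OF Hc] by blast+
  have Ac: "?A \<in> carrier_mat ?N ?N" by (rule carrier_matI) (simp_all add: dH)
  have Ae: "\<And>a b. a < ?N \<Longrightarrow> b < ?N \<Longrightarrow> ?A $$ (a, b) = c * (dl p a * dl q b + dl q a * dl p b)"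
    by (simp add: dH He)
  have PW: "(?A ^\<^sub>m k) $$ (i, j) = gk c p q k i j" if "i < ?N" "j < ?N" for k i j
  proof (rule pow_entry[OF Ac pN qN pq])
    show "\<And>a b. a < ?N \<Longrightarrow> b < ?N \<Longrightarrow> ?A $$ (a, b) = c * (dl p a * dl q b + dl q a * dl p b)"
      by (rule Ae)
  qed (use that in simp_all)
  have LHS: "mexp ?A $$ (i, j) = (dl j i - Xp p q i j - Xm p q i j) + exp c * Xp p q i j + exp (-c) * Xm p q i j"
    if i: "i < ?N" and j: "j < ?N" for i j
  proof -
    have "mexp ?A $$ (i, j) = (\<Sum>k. (?A ^\<^sub>m k) $$ (i, j) / of_nat (fact k))"
      unfolding mexp_def using i j by (simp add: dH)
    also have "\<dots> = (\<Sum>k. gk c p q k i j / of_nat (fact k))"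
      by (simp only: PW[OF i j])
    also have "\<dots> = (dl j i - Xp p q i j - Xm p q i j) + exp c * Xp p q i j + exp (-c) * Xm p q i j"
      by (rule sums_unique[symmetric]) (rule gk_sums)
    finally show ?thesis .
  qed
  have Gc: "G \<in> carrier_mat ?N ?N" and GG: "dagger G * G = 1\<^sub>m ?N"
    using G unfolding unitary_def by blast+
  have dG: "dim_row G = ?N" "dim_col G = ?N" using carrier_matD[OF Gc] by blast+
  have v2: "\<forall>i\<in>{1..n}. (if i = 1 then 0 else (1::nat)) < 2" by simp
  have s2: "\<forall>i\<in>{1..n}. (1::nat) < 2" by simp
  have rN: "r < ?N" unfolding r_def by (rule bi_lt[OF v2])
  have sN: "s < ?N" unfolding s_def by (rule bi_lt[OF s2])
  have n1: "(1::nat) \<in> {1..n}" using n by simp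
  have qr: "j \<in> {1..n} \<Longrightarrow> qbit n r j = (if j = 1 then 0 else 1)" for j
    unfolding r_def by (rule qbit_bi[OF v2])
  have qs: "j \<in> {1..n} \<Longrightarrow> qbit n s j = 1" for j
    unfolding s_def by (rule qbit_bi[OF s2])
  have rs: "r \<noteq> s" using qr[OF n1] qs[OF n1] by auto
  have flr: "fl n r = s"
  proof (rule qbit_inj[OF fl_lt sN], intro ballI)
    fix j assume j: "j \<in> {1..n}"
    show "qbit n (fl n r) j = qbit n s j" unfolding qbit_fl[OF j] qs[OF j]
      using qr[OF j] qr[OF n1] by simp
  qed
  have fls: "fl n s = r" using fl_fl[OF rN] flr by simp
  have fl_eq_s: "fl n a = s \<longleftrightarrow> a = r" if a: "a < ?N" for a
    using fl_fl[OF a] fls flr by auto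
  let ?xp = "complex_of_real (1 / sqrt 2) \<cdot>\<^sub>v (unit_vec ?N p + unit_vec ?N q)"
  let ?xm = "complex_of_real (1 / sqrt 2) \<cdot>\<^sub>v (unit_vec ?N p - unit_vec ?N q)"
  have kets: "ket n (\<lambda>i. nat ((1 + u i) div 2)) = unit_vec ?N p"
     "ket n (\<lambda>i. nat ((1 - u i) div 2)) = unit_vec ?N q"
     "ket n (\<lambda>i. if i = 1 then 0 else 1) = unit_vec ?N r"
     "ket n (\<lambda>i. 1) = unit_vec ?N s"
    unfolding ket_def p_def q_def r_def s_def by simp_all
  have Gxp: "G *\<^sub>v ?xp = unit_vec ?N r" using Gp unfolding kets .
  have Gxm: "G *\<^sub>v ?xm = unit_vec ?N s" using Gm unfolding kets .
  have Gr: "cnj (G $$ (r, i)) = complex_of_real (1 / sqrt 2) * (dl p i + dl q i)" if i: "i < ?N" for i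
  proof -
    have "cnj (G $$ (r, i)) = ?xp $ i" by (rule G_row[OF G rN i _ Gxp]) simp
    also have "\<dots> = complex_of_real (1 / sqrt 2) * (dl p i + dl q i)" using i pN qN by (simp add: dl_def)
    finally show ?thesis .
  qed
  have Gs: "cnj (G $$ (s, i)) = complex_of_real (1 / sqrt 2) * (dl p i - dl q i)" if i: "i < ?N" for i
  proof -
    have "cnj (G $$ (s, i)) = ?xm $ i" by (rule G_row[OF G sN i _ Gxm]) simp
    also have "\<dots> = complex_of_real (1 / sqrt 2) * (dl p i - dl q i)" using i pN qN by (simp add: dl_def)
    finally show ?thesis .
  qed
  have GrGr: "cnj (G $$ (r, i)) * G $$ (r, j) = Xp p q i j" if i: "i < ?N" and j: "j < ?N" for i j
  proof -
    have "G $$ (r, j) = cnj (cnj (G $$ (r, j)))" by simp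
    also have "\<dots> = complex_of_real (1 / sqrt 2) * (dl p j + dl q j)" unfolding Gr[OF j] by simp
    finally have e: "G $$ (r, j) = complex_of_real (1 / sqrt 2) * (dl p j + dl q j)" .
    show ?thesis unfolding Gr[OF i] e Xp_def
      by (subst rearr, subst half_sq, simp)
  qed
  have GsGs: "cnj (G $$ (s, i)) * G $$ (s, j) = Xm p q i j" if i: "i < ?N" and j: "j < ?N" for i j
  proof -
    have "G $$ (s, j) = cnj (cnj (G $$ (s, j)))" by simp
    also have "\<dots> = complex_of_real (1 / sqrt 2) * (dl p j - dl q j)" unfolding Gs[OF j] by simp
    finally have e: "G $$ (s, j) = complex_of_real (1 / sqrt 2) * (dl p j - dl q j)" .
    show ?thesis unfolding Gs[OF i] e Xm_def
      by (subst rearr, subst half_sq, simp)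
  qed
  have GdG: "(\<Sum>a<?N. cnj (G $$ (a, i)) * G $$ (a, j)) = dl j i" if i: "i < ?N" and j: "j < ?N" for i j
  proof -
    have "(dagger G * G) $$ (i, j) = (\<Sum>a<dim_col (dagger G). dagger G $$ (i, a) * G $$ (a, j))"
      by (rule mult_entry) (simp_all add: dG i j)
    also have "\<dots> = (\<Sum>a<?N. cnj (G $$ (a, i)) * G $$ (a, j))"
      by (rule sum.cong) (simp_all add: dG dagger_entry i)
    finally show ?thesis unfolding GG using i j by (simp add: dl_def)
  qed
  let ?X = "on_qubit n 1 pauliX"
  let ?M1 = "dagger G * phase_gate n \<beta>"
  let ?M2 = "?M1 * ?X"
  let ?M3 = "?M2 * phase_gate n (- \<beta>)"
  let ?M4 = "?M3 * ?X"
  have d1: "dim_row ?M1 = ?N" "dim_col ?M1 = ?N" by (simp_all add: dG)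
  have d2: "dim_row ?M2 = ?N" "dim_col ?M2 = ?N" by (simp_all add: dG)
  have d3: "dim_row ?M3 = ?N" "dim_col ?M3 = ?N" by (simp_all add: dG)
  have d4: "dim_row ?M4 = ?N" "dim_col ?M4 = ?N" by (simp_all add: dG)
  have E1: "?M1 $$ (i, a) = cnj (G $$ (a, i)) * dph n \<beta> a" if i: "i < ?N" and a: "a < ?N" for i a
  proof -
    have "?M1 $$ (i, a) = dagger G $$ (i, a) * dph n \<beta> a"
      by (rule right_P) (simp_all add: dG i a)
    then show ?thesis by (simp add: dagger_entry dG i a)
  qed
  have E2: "?M2 $$ (i, a) = ?M1 $$ (i, fl n a)" if i: "i < ?N" and a: "a < ?N" for i a
    by (rule right_X[OF d1(2) _ a n]) (simp add: dG i)
  have E3: "?M3 $$ (i, a) = ?M2 $$ (i, a) * dph n (- \<beta>) a" if i: "i < ?N" and a: "a < ?N" for i a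
    by (rule right_P[OF d2(2) _ a]) (simp add: dG i)
  have E4: "?M4 $$ (i, a) = ?M3 $$ (i, fl n a)" if i: "i < ?N" and a: "a < ?N" for i a
    by (rule right_X[OF d3(2) _ a n]) (simp add: dG i)
  have E: "?M4 $$ (i, a) = cnj (G $$ (a, i)) * (dph n \<beta> a * dph n (- \<beta>) (fl n a))"
    if i: "i < ?N" and a: "a < ?N" for i a
    unfolding E4[OF i a] E3[OF i fl_lt] E2[OF i fl_lt] fl_fl[OF a] E1[OF i a] by (simp only: mult.assoc)
  have ec1: "exp (\<i> * complex_of_real \<beta>) = exp (- c)" by (simp add: c_def)
  have ec2: "exp (\<i> * complex_of_real (- \<beta>)) = exp c" by (simp add: c_def)
  have ev: "dph n \<beta> a * dph n (- \<beta>) (fl n a) = 1 + (exp (- c) - 1) * dl s a + (exp c - 1) * dl r a"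
    if a: "a < ?N" for a
  proof -
    have dd: "dph n \<theta> b = (if b = s then exp (\<i> * complex_of_real \<theta>) else 1)" for \<theta> b
      by (simp add: dph_def s_def)
    consider "a = s" | "a = r" | "a \<noteq> s" "a \<noteq> r" by blast
    then show ?thesis
    proof cases
      case 1 then show ?thesis using rs fls unfolding dd ec1 by (simp add: dl_def)
    next
      case 2 then show ?thesis using rs flr unfolding dd ec2 by (simp add: dl_def)
    next
      case 3
      then have "fl n a \<noteq> s" using fl_eq_s[OF a] by simp
      then show ?thesis using 3 unfolding dd by (simp add: dl_def)
    qed
  qed
  have RHS: "(?M4 * G) $$ (i, j) = dl j i + (exp (- c) - 1) * Xm p q i j + (exp c - 1) * Xp p q i j"
    if i: "i < ?N" and j: "j < ?N" for i j
  proof -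
    let ?f = "\<lambda>a. cnj (G $$ (a, i)) * G $$ (a, j)"
    have "(?M4 * G) $$ (i, j) = (\<Sum>a<dim_col ?M4. ?M4 $$ (i, a) * G $$ (a, j))"
      by (rule mult_entry) (simp_all add: d4 dG i j)
    also have "\<dots> = (\<Sum>a<?N. ?f a + (exp (- c) - 1) * (dl s a * ?f a) + (exp c - 1) * (dl r a * ?f a))"
      unfolding d4(2)
    proof (rule sum.cong[OF refl])
      fix a assume "a \<in> {..<?N}"
      then have a: "a < ?N" by simp
      show "?M4 $$ (i, a) * G $$ (a, j) = ?f a + (exp (- c) - 1) * (dl s a * ?f a) + (exp c - 1) * (dl r a * ?f a)"
        unfolding E[OF i a] ev[OF a] by (simp add: algebra_simps)
    qed
    also have "\<dots> = (\<Sum>a<?N. ?f a) + (exp (- c) - 1) * (\<Sum>a<?N. dl s a * ?f a) + (exp c - 1) * (\<Sum>a<?N. dl r a * ?f a)"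
      by (simp add: sum.distrib sum_distrib_left)
    also have "\<dots> = dl j i + (exp (- c) - 1) * Xm p q i j + (exp c - 1) * Xp p q i j"
      unfolding dl_sum[OF sN] dl_sum[OF rN] GdG[OF i j] GsGs[OF i j] GrGr[OF i j] ..
    finally show ?thesis .
  qed
  have main: "mexp ?A = ?M4 * G"
  proof (rule eq_matI)
    show "dim_row (mexp ?A) = dim_row (?M4 * G)" by (simp add: mexp_def dH dG)
    show "dim_col (mexp ?A) = dim_col (?M4 * G)" by (simp add: mexp_def dH dG)
    fix i j assume i: "i < dim_row (?M4 * G)" and j: "j < dim_col (?M4 * G)"
    then have i: "i < ?N" and j: "j < ?N" by (simp_all add: dG)
    show "mexp ?A $$ (i, j) = (?M4 * G) $$ (i, j)"
      unfolding LHS[OF i j] RHS[OF i j] by (simp add: algebra_simps)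
  qed
  then show ?thesis unfolding c_def .
qed

end
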